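(* The set $\widehat{c}\setminus c$ is strongly $\mathfrak{c}$-algebrable in the algebra $\ell^\infty$ (with pointwise operations).
   Context: $\ell^\infty$ is the algebra of bounded real sequences with coordinatewise addition, scalar multiplication and multiplication; $c$ is the set of convergent sequences. A Banach limit is a linear functional $L\colon\ell^\infty\to\mathbb R$ such that for every $(x_n)\in\ell^\infty$: (1) if $x_n\ge0$ for all $n$ then $L((x_n))\ge0$; (2) $L((x_2,x_3,\dots))=L((x_1,x_2,\dots))$; (3) $L((1,1,\dots))=1$. $\widehat{c}$ is the set of $x\in\ell^\infty$ for which there is $s\in\mathbb R$ with $L(x)=s$ for every Banach limit $L$. A subset $A$ of a commutative algebra $\mathcal L$ is strongly $\kappa$-algebrable if $A\cup\{0\}$ contains a $\kappa$-generated subalgebra (minimal number of generators of cardinality $\kappa$) which is isomorphic to a free algebra; equivalently, there is a set $Z\subset\mathcal L$ of cardinality $\kappa$ such that for every $n$, every non-zero polynomial $P$ in $n$ variables without constant term and all distinct $z_1,\dots,z_n\in Z$, $P(z_1,\dots,z_n)\in A\setminus\{0\}$. $\mathfrak c$ is the cardinality of the continuum. *)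

theory Defs
  imports "HOL-Analysis.Analysis" "HOL-Library.Equipollence"
begin

definition linf :: "(nat \<Rightarrow> real) set" where
  "linf = {x. bounded (range x)}"

definition conv_seqs :: "(nat \<Rightarrow> real) set" where
  "conv_seqs = {x. convergent x}"

definition banach_limit :: "((nat \<Rightarrow> real) \<Rightarrow> real) \<Rightarrow> bool" where
  "banach_limit L \<longleftrightarrow>
     (\<forall>x\<in>linf. \<forall>y\<in>linf. L (\<lambda>n. x n + y n) = L x + L y) \<and>
     (\<forall>x\<in>linf. \<forall>a. L (\<lambda>n. a * x n) = a * L x) \<and>
     (\<forall>x\<in>linf. (\<forall>n. x n \<ge> 0) \<longrightarrow> L x \<ge> 0) \<and>
     (\<forall>x\<in>linf. L (\<lambda>n. x (Suc n)) = L x) \<and>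
     L (\<lambda>n. 1) = 1"

definition c_hat :: "(nat \<Rightarrow> real) set" where
  "c_hat = {x \<in> linf. \<exists>s. \<forall>L. banach_limit L \<longrightarrow> L x = s}"

text \<open>A real polynomial in the variables X_0, ..., X_(n-1) is given by its coefficient
  function on exponent vectors (nat => nat), with finite support consisting of exponent
  vectors that vanish from index n on. "Without constant term" means the coefficient of the
  zero exponent vector is 0.\<close>

definition poly_nc :: "nat \<Rightarrow> ((nat \<Rightarrow> nat) \<Rightarrow> real) \<Rightarrow> bool" where
  "poly_nc n a \<longleftrightarrow> finite {e. a e \<noteq> 0} \<and>
     (\<forall>e. a e \<noteq> 0 \<longrightarrow> (\<forall>i\<ge>n. e i = 0)) \<and> a (\<lambda>_. 0) = 0"

definition poly_eval :: "nat \<Rightarrow> ((nat \<Rightarrow> nat) \<Rightarrow> real) \<Rightarrow> (nat \<Rightarrow> nat \<Rightarrow> real) \<Rightarrow> nat \<Rightarrow> real" where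
  "poly_eval n a z = (\<lambda>k. \<Sum>e\<in>{e. a e \<noteq> 0}. a e * (\<Prod>i<n. (z i k) ^ (e i)))"

definition strongly_algebrable_linf :: "(nat \<Rightarrow> real) set \<Rightarrow> 'b set \<Rightarrow> bool" where
  "strongly_algebrable_linf A K \<longleftrightarrow>
     (\<exists>Z. Z \<subseteq> linf \<and> Z \<approx> K \<and>
        (\<forall>n a z. poly_nc n a \<and> (\<exists>e. a e \<noteq> 0) \<and> inj_on z {..<n} \<and> z ` {..<n} \<subseteq> Z
            \<longrightarrow> poly_eval n a z \<in> A - {\<lambda>_. 0}))"

end

theory Submission
  imports Defs
begin



lemma linf_iff: "x \<in> linf \<longleftrightarrow> (\<exists>M. \<forall>n. \<bar>x n\<bar> \<le> M)"
  unfolding linf_def bounded_iff by auto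

lemma linf_comp: "x \<in> linf \<Longrightarrow> (\<lambda>n. x (f n)) \<in> linf"
  unfolding linf_iff by blast

lemma linf_add: "x \<in> linf \<Longrightarrow> y \<in> linf \<Longrightarrow> (\<lambda>n. x n + y n) \<in> linf"
  unfolding linf_iff by (meson abs_triangle_ineq add_mono order_trans)

lemma linf_const: "(\<lambda>n. c) \<in> linf"
  unfolding linf_iff by blast

lemma linf_sum: "(\<And>i. i < (m::nat) \<Longrightarrow> u i \<in> linf) \<Longrightarrow> (\<lambda>n. \<Sum>i<m. u i n) \<in> linf"
proof (induction m)
  case 0 then show ?case by (simp add: linf_const)
next
  case (Suc m) then show ?case by (simp add: linf_add)
qed

lemma linf_neg: "x \<in> linf \<Longrightarrow> (\<lambda>n. - x n) \<in> linf"
  unfolding linf_iff by auto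

context
  fixes L assumes BL: "banach_limit L"
begin

lemma BL_add: "x \<in> linf \<Longrightarrow> y \<in> linf \<Longrightarrow> L (\<lambda>n. x n + y n) = L x + L y"
  using BL unfolding banach_limit_def by blast
lemma BL_smult: "x \<in> linf \<Longrightarrow> L (\<lambda>n. a * x n) = a * L x"
  using BL unfolding banach_limit_def by blast
lemma BL_pos: "x \<in> linf \<Longrightarrow> (\<And>n. x n \<ge> 0) \<Longrightarrow> L x \<ge> 0"
  using BL unfolding banach_limit_def by blast
lemma BL_shift: "x \<in> linf \<Longrightarrow> L (\<lambda>n. x (Suc n)) = L x"
  using BL unfolding banach_limit_def by blast
lemma BL_const: "L (\<lambda>n. c) = c"
proof -
  have "L (\<lambda>n. c * 1) = c * L (\<lambda>n. 1)" by (rule BL_smult[OF linf_const])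
  moreover have "L (\<lambda>n. 1) = 1" using BL unfolding banach_limit_def by blast
  ultimately show ?thesis by simp
qed
lemma BL_neg: "x \<in> linf \<Longrightarrow> L (\<lambda>n. - x n) = - L x"
  using BL_smult[of x "-1"] by simp
lemma BL_mono: "u \<in> linf \<Longrightarrow> v \<in> linf \<Longrightarrow> (\<And>n. u n \<le> v n) \<Longrightarrow> L u \<le> L v"
proof -
  assume u: "u \<in> linf" and v: "v \<in> linf" and le: "\<And>n. u n \<le> v n"
  have "L (\<lambda>n. v n + - u n) \<ge> 0" using le by (intro BL_pos linf_add v linf_neg u) auto
  also have "L (\<lambda>n. v n + - u n) = L v - L u" using BL_add[OF v linf_neg[OF u]] BL_neg[OF u] by simp
  finally show ?thesis by simp
qed
lemma BL_shiftn: "x \<in> linf \<Longrightarrow> L (\<lambda>n. x (n + j)) = L x"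
proof (induction j)
  case 0 then show ?case by simp
next
  case (Suc j)
  have "L (\<lambda>n. x (n + Suc j)) = L (\<lambda>n. (\<lambda>n'. x (n' + j)) (Suc n))" by simp
  also have "\<dots> = L (\<lambda>n'. x (n' + j))" by (rule BL_shift[OF linf_comp[OF Suc.prems]])
  finally show ?case using Suc by simp
qed
lemma BL_sum: "(\<And>i. i < (m::nat) \<Longrightarrow> u i \<in> linf) \<Longrightarrow> L (\<lambda>n. \<Sum>i<m. u i n) = (\<Sum>i<m. L (u i))"
proof (induction m)
  case 0 then show ?case using BL_const[of 0] by simp
next
  case (Suc m)
  have "L (\<lambda>n. \<Sum>i<Suc m. u i n) = L (\<lambda>n. (\<Sum>i<m. u i n) + u m n)" by simp
  also have "\<dots> = L (\<lambda>n. \<Sum>i<m. u i n) + L (u m)"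
    using BL_add[OF linf_sum, of m u "u m"] Suc.prems by (simp add: eta_contract_eq)
  finally show ?case using Suc by simp
qed
end

definition pw :: "nat \<Rightarrow> bool" where "pw k \<longleftrightarrow> (\<exists>m. k = 2^m)"

lemma pow2_gap:
  assumes "(2::nat)^a = n + m + i" "(2::nat)^b = n + m + i'" "i < m" "i' < m"
  shows "i = i'"
proof (rule ccontr)
  assume ne: "i \<noteq> i'"
  then have "a \<noteq> b" using assms by auto
  then consider "a < b" | "b < a" by linarith
  then show False
  proof cases
    case 1
    then have "(2::nat)^b \<ge> 2^(Suc a)" by (intro power_increasing) auto
    then show False using assms by simp
  next
    case 2
    then have "(2::nat)^a \<ge> 2^(Suc b)" by (intro power_increasing) auto
    then show False using assms by simp
  qed
qed

lemma BL_sparse_le: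
  assumes BL: "banach_limit L" and x: "x \<in> linf" and supp: "\<And>k. \<not> pw k \<Longrightarrow> x k = 0"
  shows "L x \<le> 0"
proof (rule ccontr)
  assume "\<not> L x \<le> 0"
  then have pos: "L x > 0" by simp
  obtain M where M: "\<And>n. \<bar>x n\<bar> \<le> M" using x linf_iff by blast
  then have M0: "M \<ge> 0" by (meson abs_ge_zero order_trans)
  obtain m :: nat where m: "M / L x < m" using reals_Archimedean2 by blast
  have ptw: "(\<Sum>i<m. x (n + (m + i))) \<le> M" for n
  proof (cases "\<exists>i<m. pw (n + (m + i))")
    case False
    then have "(\<Sum>i<m. x (n + (m + i))) = 0" using supp by simp
    then show ?thesis using M0 by simp
  next
    case True
    then obtain i0 where i0: "i0 < m" "pw (n + (m + i0))" by blast
    have "(\<Sum>i<m. x (n + (m + i))) \<le> (\<Sum>i<m. if i = i0 then M else 0)"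
    proof (rule sum_mono)
      fix i assume i: "i \<in> {..<m}"
      show "x (n + (m + i)) \<le> (if i = i0 then M else 0)"
      proof (cases "i = i0")
        case True then show ?thesis using M[of "n + (m + i)"] by simp
      next
        case False
        have "\<not> pw (n + (m + i))"
        proof
          assume "pw (n + (m + i))"
          then obtain a where a0: "n + (m + i) = 2^a" unfolding pw_def by blast
          have a: "(2::nat)^a = n + m + i" using a0 by simp
          obtain b where b0: "n + (m + i0) = 2^b" using i0(2) unfolding pw_def by blast
          have b: "(2::nat)^b = n + m + i0" using b0 by simp
          have "i = i0" by (rule pow2_gap[OF a b]) (use i i0 in auto)
          then show False using False by simp
        qed
        then show ?thesis using supp False by simp
      qed
    qed
    also have "\<dots> = M" using i0 by simp
    finally show ?thesis .
  qed
  have "real m * L x = (\<Sum>i<m. L (\<lambda>n. x (n + (m + i))))"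
    using BL_shiftn[OF BL x] by simp
  also have "\<dots> = L (\<lambda>n. \<Sum>i<m. x (n + (m + i)))"
    by (rule BL_sum[OF BL, symmetric]) (rule linf_comp[OF x])
  also have "\<dots> \<le> L (\<lambda>n. M)"
    by (rule BL_mono[OF BL linf_sum linf_const ptw]) (rule linf_comp[OF x])
  also have "\<dots> = M" by (rule BL_const[OF BL])
  finally have "real m * L x \<le> M" .
  moreover have "M < real m * L x" using m pos by (simp add: divide_less_eq)
  ultimately show False by simp
qed

lemma BL_sparse:
  assumes BL: "banach_limit L" and x: "x \<in> linf" and supp: "\<And>k. \<not> pw k \<Longrightarrow> x k = 0"
  shows "L x = 0"
proof -
  have "L x \<le> 0" by (rule BL_sparse_le[OF BL x supp])
  moreover have "L (\<lambda>n. - x n) \<le> 0" by (rule BL_sparse_le[OF BL linf_neg[OF x]]) (use supp in auto)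
  ultimately show ?thesis using BL_neg[OF BL x] by simp
qed

lemma exp_neg_lim: "(a::real) < 0 \<Longrightarrow> ((\<lambda>s. exp (a * s)) \<longlongrightarrow> 0) at_top"
proof -
  assume a: "a < 0"
  have "filterlim (\<lambda>s. a * s) at_bot at_top"
    using a by (intro filterlim_tendsto_neg_mult_at_bot[OF tendsto_const] filterlim_ident) auto
  then show ?thesis using exp_at_bot filterlim_compose by blast
qed


lemma exp_poly_ev:
  fixes \<gamma> c :: "'a \<Rightarrow> real"
  assumes fin: "finite E" and inj: "inj_on \<gamma> E" and e0: "jj \<in> E" "c jj \<noteq> 0"
  shows "eventually (\<lambda>s::real. (\<Sum>e\<in>E. c e * exp (\<gamma> e * s)) \<noteq> 0) at_top"
proof -
  define F where "F = {e\<in>E. c e \<noteq> 0}"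
  have finF: "finite F" and neF: "F \<noteq> {}" using fin e0 by (auto simp: F_def)
  define g where "g = Max (\<gamma> ` F)"
  have "g \<in> \<gamma> ` F" unfolding g_def using finF neF by (intro Max_in) auto
  then obtain e1 where e1: "e1 \<in> F" "\<gamma> e1 = g" by auto
  have ge: "\<gamma> e \<le> \<gamma> e1" if "e \<in> F" for e using that finF e1 unfolding g_def by auto
  have e1E: "e1 \<in> E" "c e1 \<noteq> 0" using e1 by (auto simp: F_def)
  have lim: "((\<lambda>s. \<Sum>e\<in>E. c e * exp ((\<gamma> e - \<gamma> e1) * s)) \<longlongrightarrow> (\<Sum>e\<in>E. if e = e1 then c e1 else 0)) at_top"
  proof (rule tendsto_sum)
    fix e assume e: "e \<in> E"
    show "((\<lambda>s. c e * exp ((\<gamma> e - \<gamma> e1) * s)) \<longlongrightarrow> (if e = e1 then c e1 else 0)) at_top"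
    proof (cases "e = e1")
      case True then show ?thesis by simp
    next
      case False
      show ?thesis
      proof (cases "c e = 0")
        case True then show ?thesis using False by simp
      next
        case cne: False
        then have eF: "e \<in> F" using e by (simp add: F_def)
        have "\<gamma> e \<noteq> \<gamma> e1" using inj e e1E(1) False unfolding inj_on_def by blast
        then have "\<gamma> e < \<gamma> e1" using ge[OF eF] by simp
        then have "((\<lambda>s. exp ((\<gamma> e - \<gamma> e1) * s)) \<longlongrightarrow> 0) at_top" by (intro exp_neg_lim) simp
        then have "((\<lambda>s. c e * exp ((\<gamma> e - \<gamma> e1) * s)) \<longlongrightarrow> c e * 0) at_top"
          by (intro tendsto_mult tendsto_const)
        then show ?thesis using False by simp
      qed
    qed
  qed
  moreover have "(\<Sum>e\<in>E. if e = e1 then c e1 else 0) = c e1" using e1E fin by simp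
  ultimately have "eventually (\<lambda>s. (\<Sum>e\<in>E. c e * exp ((\<gamma> e - \<gamma> e1) * s)) \<noteq> 0) at_top"
    using e1E by (intro tendsto_imp_eventually_ne) auto
  then show ?thesis
  proof (rule eventually_mono)
    fix s assume ne: "(\<Sum>e\<in>E. c e * exp ((\<gamma> e - \<gamma> e1) * s)) \<noteq> 0"
    have t: "exp (\<gamma> e1 * s) * (c e * exp ((\<gamma> e - \<gamma> e1) * s)) = c e * exp (\<gamma> e * s)" for e
      by (simp add: left_diff_distrib exp_diff)
    have "(\<Sum>e\<in>E. c e * exp (\<gamma> e * s)) = exp (\<gamma> e1 * s) * (\<Sum>e\<in>E. c e * exp ((\<gamma> e - \<gamma> e1) * s))"
      by (simp add: sum_distrib_left t)
    then show "(\<Sum>e\<in>E. c e * exp (\<gamma> e * s)) \<noteq> 0" using ne by simp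
  qed
qed

definition ex2 :: "nat \<Rightarrow> nat" where "ex2 k = (THE m. k = 2^m)"
definition lamN :: "nat \<Rightarrow> nat \<times> nat" where "lamN k = prod_decode (fst (prod_decode (ex2 k)))"
definition sq :: "real \<Rightarrow> nat \<Rightarrow> real" where
  "sq r k = (if pw k then exp (- (exp (r * real (fst (lamN k))) * real (snd (lamN k)))) else 0)"

lemma ex2_pow: "ex2 (2^m) = m" unfolding ex2_def by (rule the_equality) auto

lemma sq_pos: "sq r (2^(prod_encode (prod_encode (l, N), j))) = exp (- (exp (r * real l) * real N))"
  by (auto simp add: sq_def lamN_def ex2_pow pw_def)

lemma sq_bound: "0 \<le> sq r k \<and> sq r k \<le> 1"
  by (auto simp: sq_def)

lemma sq_inj: "inj sq"
proof (rule injI)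
  fix r r' assume "sq r = sq r'"
  then have "sq r (2^(prod_encode (prod_encode (1, 1), 0))) = sq r' (2^(prod_encode (prod_encode (1, 1), 0)))" by simp
  then show "r = r'" unfolding sq_pos by simp
qed

lemma odd_not_pw: "\<not> pw (2*j+3)"
proof
  assume "pw (2*j+3)"
  then obtain m where m: "(2::nat)^m = 2*j+3" by (auto simp: pw_def)
  show False
  proof (cases m)
    case 0 then show False using m by simp
  next
    case (Suc m') then have "2 * 2^m' = 2*j+(3::nat)" using m by simp
    then show False by presburger
  qed
qed

lemma sm_pos: "strict_mono (\<lambda>j. (2::nat)^(prod_encode (prod_encode (l, N), j)))"
  unfolding strict_mono_Suc_iff
proof
  fix j
  have "prod_encode (prod_encode (l, N), j) < prod_encode (prod_encode (l, N), Suc j)"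
    by (simp add: prod_encode_def)
  then show "(2::nat)^(prod_encode (prod_encode (l, N), j)) < 2^(prod_encode (prod_encode (l, N), Suc j))"
    by (intro power_strict_increasing) auto
qed

theorem theorem3p3:
  shows "strongly_algebrable_linf (c_hat - conv_seqs) (UNIV :: real set)"
proof -
  have C1: "range sq \<subseteq> linf"
  proof clarify
    fix r
    have "\<forall>n. \<bar>sq r n\<bar> \<le> 1" using sq_bound by (metis abs_of_nonneg)
    then show "sq r \<in> linf" unfolding linf_iff by blast
  qed
  have "bij_betw sq UNIV (range sq)" by (simp add: bij_betw_def sq_inj)
  then have "(UNIV::real set) \<approx> range sq" unfolding eqpoll_def by blast
  then have C2: "range sq \<approx> (UNIV::real set)" by (rule eqpoll_sym)
  have C3: "poly_eval n a z \<in> c_hat - conv_seqs - {\<lambda>_. 0}" if H: "poly_nc n a \<and> (\<exists>e. a e \<noteq> 0) \<and> inj_on z {..<n} \<and> z ` {..<n} \<subseteq> range sq" for n a z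
  proof -
  define E where "E = {e. a e \<noteq> 0}"
  have finE: "finite E" and supp: "\<And>e i. e \<in> E \<Longrightarrow> n \<le> i \<Longrightarrow> e i = 0" and a0: "a (\<lambda>_. 0) = 0"
    using H by (auto simp: poly_nc_def E_def)
  obtain e0 where e0: "e0 \<in> E" using H by (auto simp: E_def)
  have "\<forall>i\<in>{..<n}. \<exists>r. z i = sq r" using H by blast
  from bchoice[OF this] obtain r where r0: "\<forall>i\<in>{..<n}. z i = sq (r i)" by blast
  have r: "\<And>i. i < n \<Longrightarrow> z i = sq (r i)" using r0 by simp
  have injr: "inj_on r {..<n}"
  proof (rule inj_onI)
    fix i j assume ij: "i \<in> {..<n}" "j \<in> {..<n}" "r i = r j"
    then have "z i = z j" using r by simp
    then show "i = j" using H ij by (meson inj_onD)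
  qed
  have nz: "\<exists>i<n. e i \<noteq> 0" if "e \<in> E" for e
  proof (rule ccontr)
    assume A: "\<not> ?thesis"
    have eE: "e \<in> E" by (rule that)
    have "e = (\<lambda>_. 0)"
    proof
      fix i show "e i = 0" using A supp[OF eE, of i] by (meson leI)
    qed
    then show False using that a0 by (simp add: E_def)
  qed
  define y where "y = poly_eval n a z"
  have y_eq: "y k = (\<Sum>e\<in>E. a e * (\<Prod>i<n. (sq (r i) k) ^ (e i)))" for k
    unfolding y_def poly_eval_def E_def[symmetric] by (intro sum.cong refl arg_cong2[where f="(*)"] prod.cong) (simp_all add: r)
  have y0: "y k = 0" if npw: "\<not> pw k" for k
  proof -
    have P0: "(\<Prod>i<n. (sq (r i) k) ^ (e i)) = 0" if eE: "e \<in> E" for e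
    proof -
      obtain i where "i < n" "e i \<noteq> 0" using nz[OF eE] by blast
      then show ?thesis using npw by (auto simp: sq_def prod_zero_iff)
    qed
    show ?thesis unfolding y_eq by (rule sum.neutral) (simp add: P0)
  qed
  have ybd: "\<bar>y k\<bar> \<le> (\<Sum>e\<in>E. \<bar>a e\<bar>)" for k
  proof -
    have "\<bar>y k\<bar> \<le> (\<Sum>e\<in>E. \<bar>a e * (\<Prod>i<n. (sq (r i) k) ^ (e i))\<bar>)" unfolding y_eq by (rule sum_abs)
    also have "\<dots> \<le> (\<Sum>e\<in>E. \<bar>a e\<bar>)"
    proof (rule sum_mono)
      fix e
      have b0: "0 \<le> (sq (r i) k) ^ (e i)" for i using sq_bound by simp
      have b1: "(sq (r i) k) ^ (e i) \<le> 1" for i using sq_bound by (simp add: power_le_one)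
      have "0 \<le> (\<Prod>i<n. (sq (r i) k) ^ (e i))" by (rule prod_nonneg) (simp add: b0)
      moreover have "(\<Prod>i<n. (sq (r i) k) ^ (e i)) \<le> 1" by (rule prod_le_1) (simp add: b0 b1)
      ultimately have "\<bar>\<Prod>i<n. (sq (r i) k) ^ (e i)\<bar> \<le> 1" by simp
      then show "\<bar>a e * (\<Prod>i<n. (sq (r i) k) ^ (e i))\<bar> \<le> \<bar>a e\<bar>"
        unfolding abs_mult by (rule mult_left_le) simp
    qed
    finally show ?thesis .
  qed
  have ylinf: "y \<in> linf" using ybd unfolding linf_iff by blast
  have ychat: "y \<in> c_hat" unfolding c_hat_def using ylinf by (auto intro: BL_sparse[OF _ ylinf y0])
  define \<beta> where "\<beta> l e = (\<Sum>i<n. real (e i) * exp (r i * real l))" for l e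
  have y_pos: "y (2^(prod_encode (prod_encode (l, N), j))) = (\<Sum>e\<in>E. a e * exp (- \<beta> l e * real N))" for l N j
  proof -
    have "(\<Prod>i<n. (sq (r i) (2^(prod_encode (prod_encode (l, N), j)))) ^ (e i)) = exp (- \<beta> l e * real N)" for e
    proof -
      have "(\<Prod>i<n. (sq (r i) (2^(prod_encode (prod_encode (l, N), j)))) ^ (e i))
           = (\<Prod>i<n. exp (real (e i) * (- (exp (r i * real l) * real N))))"
        unfolding sq_pos by (intro prod.cong refl) (simp add: exp_of_nat_mult[symmetric])
      also have "\<dots> = exp (\<Sum>i<n. real (e i) * (- (exp (r i * real l) * real N)))" by (simp add: exp_sum)
      also have "(\<Sum>i<n. real (e i) * (- (exp (r i * real l) * real N))) = - \<beta> l e * real N"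
        unfolding \<beta>_def by (simp add: sum_distrib_right sum_negf[symmetric] mult.assoc)
      finally show ?thesis .
    qed
    then show ?thesis unfolding y_eq by (intro sum.cong refl) simp
  qed
  have evp: "\<forall>p\<in>E\<times>E. eventually (\<lambda>s::real. fst p \<noteq> snd p \<longrightarrow>
           (\<Sum>i\<in>{..<n}. (real (fst p i) - real (snd p i)) * exp (r i * s)) \<noteq> 0) at_top"
  proof
    fix p assume p: "p \<in> E \<times> E"
    show "eventually (\<lambda>s::real. fst p \<noteq> snd p \<longrightarrow>
           (\<Sum>i\<in>{..<n}. (real (fst p i) - real (snd p i)) * exp (r i * s)) \<noteq> 0) at_top"
    proof (cases "fst p = snd p")
      case True then show ?thesis by simp
    next
      case False
      then obtain i where i: "fst p i \<noteq> snd p i" by (auto simp: fun_eq_iff)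
      have "i < n"
      proof (rule ccontr)
        assume "\<not> i < n"
        then have "fst p i = 0" "snd p i = 0" using supp p by (auto simp: not_less)
        then show False using i by simp
      qed
      then have "eventually (\<lambda>s::real. (\<Sum>i\<in>{..<n}. (real (fst p i) - real (snd p i)) * exp (r i * s)) \<noteq> 0) at_top"
        using i by (intro exp_poly_ev[where jj=i] injr) auto
      then show ?thesis by (rule eventually_mono) simp
    qed
  qed
  have "eventually (\<lambda>s::real. \<forall>p\<in>E\<times>E. fst p \<noteq> snd p \<longrightarrow>
           (\<Sum>i\<in>{..<n}. (real (fst p i) - real (snd p i)) * exp (r i * s)) \<noteq> 0) at_top"
    using finite_SigmaI[OF finE finE] evp by (rule eventually_ball_finite)
  then obtain s0 where s0': "\<forall>s\<ge>s0. \<forall>p\<in>E\<times>E. fst p \<noteq> snd p \<longrightarrow>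
           (\<Sum>i\<in>{..<n}. (real (fst p i) - real (snd p i)) * exp (r i * s)) \<noteq> 0"
    unfolding eventually_at_top_linorder by blast
  have s0: "\<forall>p\<in>E\<times>E. fst p \<noteq> snd p \<longrightarrow>
           (\<Sum>i\<in>{..<n}. (real (fst p i) - real (snd p i)) * exp (r i * s)) \<noteq> 0" if "s \<ge> s0" for s
    using s0' that by blast
  obtain l :: nat where l: "s0 \<le> real l" using real_arch_simple by blast
  have injb: "inj_on (\<lambda>e. - \<beta> l e) E"
  proof (rule inj_onI)
    fix e e' assume ee: "e \<in> E" "e' \<in> E" "- \<beta> l e = - \<beta> l e'"
    show "e = e'"
    proof (rule ccontr)
      assume ne: "e \<noteq> e'"
      have pE: "(e, e') \<in> E \<times> E" using ee(1,2) by (rule SigmaI)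
      have "fst (e, e') \<noteq> snd (e, e') \<longrightarrow>
           (\<Sum>i\<in>{..<n}. (real (fst (e, e') i) - real (snd (e, e') i)) * exp (r i * real l)) \<noteq> 0"
        using s0[OF l] pE by (rule bspec)
      then have X: "(\<Sum>i\<in>{..<n}. (real (e i) - real (e' i)) * exp (r i * real l)) \<noteq> 0"
        using ne by simp
      have Y: "(\<Sum>i\<in>{..<n}. (real (e i) - real (e' i)) * exp (r i * real l)) = \<beta> l e - \<beta> l e'"
        unfolding \<beta>_def by (simp add: left_diff_distrib sum_subtractf)
      have Z: "\<beta> l e = \<beta> l e'" using ee(3) by simp
      show False using X unfolding Y Z by simp
    qed
  qed
  have ae0: "a e0 \<noteq> 0" using e0 by (simp add: E_def)
  have "eventually (\<lambda>s::real. (\<Sum>e\<in>E. a e * exp ((- \<beta> l e) * s)) \<noteq> 0) at_top"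
    by (rule exp_poly_ev[where c=a, OF finE injb e0 ae0])
  then obtain s1 where s1': "\<forall>s\<ge>s1. (\<Sum>e\<in>E. a e * exp ((- \<beta> l e) * s)) \<noteq> 0"
    unfolding eventually_at_top_linorder by blast
  have s1: "(\<Sum>e\<in>E. a e * exp ((- \<beta> l e) * s)) \<noteq> 0" if "s \<ge> s1" for s
    using s1' that by blast
  obtain N :: nat where N: "s1 \<le> real N" using real_arch_simple by blast
  let ?G = "(\<Sum>e\<in>E. a e * exp (- \<beta> l e * real N))"
  have g: "?G \<noteq> 0" by (rule s1[OF N])
  have notconv: "\<not> convergent y"
  proof
    assume "convergent y" then obtain L where L: "y \<longlonglongrightarrow> L" unfolding convergent_def by blast
    have sm1: "strict_mono (\<lambda>j::nat. 2*j+3)" by (rule strict_monoI) simp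
    have c1: "y \<circ> (\<lambda>j::nat. 2*j+3) = (\<lambda>j. 0)"
    proof
      fix j :: nat show "(y \<circ> (\<lambda>j. 2*j+3)) j = 0" unfolding comp_def by (rule y0[OF odd_not_pw])
    qed
    have "(y \<circ> (\<lambda>j::nat. 2*j+3)) \<longlonglongrightarrow> L" by (rule LIMSEQ_subseq_LIMSEQ[OF L sm1])
    then have "(\<lambda>j::nat. 0::real) \<longlonglongrightarrow> L" unfolding c1 .
    then have L0: "L = 0" by (rule LIMSEQ_unique[OF _ tendsto_const])
    have c2: "y \<circ> (\<lambda>j. (2::nat)^(prod_encode (prod_encode (l, N), j))) = (\<lambda>j. ?G)"
    proof
      fix j
      have "(y \<circ> (\<lambda>j. (2::nat)^(prod_encode (prod_encode (l, N), j)))) j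
          = y ((2::nat)^(prod_encode (prod_encode (l, N), j)))" by (rule comp_apply)
      also have "\<dots> = (\<Sum>e\<in>E. a e * exp (- \<beta> l e * real N))" by (rule y_pos)
      finally show "(y \<circ> (\<lambda>j. (2::nat)^(prod_encode (prod_encode (l, N), j)))) j = ?G" .
    qed
    have "(y \<circ> (\<lambda>j. (2::nat)^(prod_encode (prod_encode (l, N), j)))) \<longlonglongrightarrow> L"
      by (rule LIMSEQ_subseq_LIMSEQ[OF L sm_pos])
    then have "(\<lambda>j::nat. ?G) \<longlonglongrightarrow> L" unfolding c2 .
    then have "L = ?G" by (rule LIMSEQ_unique[OF _ tendsto_const])
    then have "?G = L" by (rule sym)
    also have "L = 0" by (rule L0)
    finally have "?G = 0" .
    with g show False by contradiction
  qed
  have ynz: "y \<notin> {\<lambda>_. 0}"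
  proof
    assume "y \<in> {\<lambda>_. 0}" then have Y: "y = (\<lambda>_. 0)" by (rule singletonD)
    have "convergent (\<lambda>_::nat. 0::real)" by (rule convergent_const)
    then have "convergent y" unfolding Y .
    with notconv show False by contradiction
  qed
  have ync: "y \<notin> conv_seqs"
  proof
    assume "y \<in> conv_seqs" then have "convergent y" unfolding conv_seqs_def by (rule CollectD)
    with notconv show False by contradiction
  qed
  have "y \<in> c_hat - conv_seqs - {\<lambda>_. 0}" by (intro DiffI ychat ync ynz)
  then show "poly_eval n a z \<in> c_hat - conv_seqs - {\<lambda>_. 0}" unfolding y_def .
  qed
  show ?thesis unfolding strongly_algebrable_linf_def
    by (intro exI[of _ "range sq"] conjI C1 C2 allI impI) (erule C3)
qed

end
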